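(* Let $\Gamma$ be a connected finite simplicial graph with at least three vertices. If $A(\Gamma)$ acts on a tree $T$ such that the stabilizer of every edge is infinite cyclic, then every vertex $v$ of $\Gamma$ of valence greater than one acts elliptically on $T$, i.e. has a fixed point in $T$.
   Context: $A(\Gamma)$ is the right-angled Artin group of $\Gamma$, generated by the vertices of $\Gamma$ with relations that adjacent vertices commute. Actions on trees are simplicial and without inversions. *)

theory Defs
  imports "HOL-Algebra.Algebra"
begin

definition simplicial_graph :: "('v \<Rightarrow> 'v \<Rightarrow> bool) \<Rightarrow> bool" where
  "simplicial_graph E \<longleftrightarrow> (\<forall>u w. E u w \<longrightarrow> E w u) \<and> (\<forall>u. \<not> E u u)"

definition graph_connected :: "('v \<Rightarrow> 'v \<Rightarrow> bool) \<Rightarrow> bool" where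
  "graph_connected E \<longleftrightarrow> (\<forall>u w. E\<^sup>*\<^sup>* u w)"

definition valence :: "('v \<Rightarrow> 'v \<Rightarrow> bool) \<Rightarrow> 'v \<Rightarrow> nat" where
  "valence E v = card {w. E v w}"

text \<open>Words over generators and their inverses: (a, True) is a, (a, False) is a^-1.
  Two words are equivalent if related by free cancellation and by commuting adjacent
  generators (and their inverses) of adjacent vertices.\<close>

inductive raag_rel :: "('v \<Rightarrow> 'v \<Rightarrow> bool) \<Rightarrow> ('v \<times> bool) list \<Rightarrow> ('v \<times> bool) list \<Rightarrow> bool"
  for E where
  refl: "raag_rel E w w"
| cancel: "raag_rel E (xs @ [(a, b), (a, \<not> b)] @ ys) (xs @ ys)"
| comm: "E a c \<Longrightarrow> raag_rel E (xs @ [(a, b), (c, d)] @ ys) (xs @ [(c, d), (a, b)] @ ys)"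
| sym: "raag_rel E u w \<Longrightarrow> raag_rel E w u"
| trans: "raag_rel E u w \<Longrightarrow> raag_rel E w z \<Longrightarrow> raag_rel E u z"

definition raag_class :: "('v \<Rightarrow> 'v \<Rightarrow> bool) \<Rightarrow> ('v \<times> bool) list \<Rightarrow> ('v \<times> bool) list set" where
  "raag_class E w = {u. raag_rel E w u}"

definition raag_mult :: "('v \<Rightarrow> 'v \<Rightarrow> bool) \<Rightarrow> ('v \<times> bool) list set \<Rightarrow> ('v \<times> bool) list set \<Rightarrow> ('v \<times> bool) list set" where
  "raag_mult E A B = raag_class E ((SOME u. u \<in> A) @ (SOME u. u \<in> B))"

definition RAAG :: "('v \<Rightarrow> 'v \<Rightarrow> bool) \<Rightarrow> ('v \<times> bool) list set monoid" where
  "RAAG E = \<lparr> carrier = range (raag_class E), monoid.mult = raag_mult E, one = raag_class E [] \<rparr>"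

definition raag_gen :: "('v \<Rightarrow> 'v \<Rightarrow> bool) \<Rightarrow> 'v \<Rightarrow> ('v \<times> bool) list set" where
  "raag_gen E v = raag_class E [(v, True)]"

definition is_tree :: "'t set \<Rightarrow> ('t \<Rightarrow> 't \<Rightarrow> bool) \<Rightarrow> bool" where
  "is_tree VT ET \<longleftrightarrow>
     VT \<noteq> {} \<and>
     (\<forall>x y. ET x y \<longrightarrow> x \<in> VT \<and> y \<in> VT) \<and>
     (\<forall>x y. ET x y \<longrightarrow> ET y x) \<and> (\<forall>x. \<not> ET x x) \<and>
     (\<forall>x\<in>VT. \<forall>y\<in>VT. ET\<^sup>*\<^sup>* x y) \<and>
     \<not> (\<exists>p. 3 \<le> length p \<and> distinct p \<and> set p \<subseteq> VT \<and>
            (\<forall>i < length p - 1. ET (p ! i) (p ! Suc i)) \<and> ET (last p) (hd p))"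

definition tree_action :: "('g, 'b) monoid_scheme \<Rightarrow> 't set \<Rightarrow> ('t \<Rightarrow> 't \<Rightarrow> bool) \<Rightarrow> ('g \<Rightarrow> 't \<Rightarrow> 't) \<Rightarrow> bool" where
  "tree_action G VT ET \<phi> \<longleftrightarrow>
     group_action G VT \<phi> \<and>
     (\<forall>g\<in>carrier G. \<forall>x y. ET x y \<longrightarrow> ET (\<phi> g x) (\<phi> g y)) \<and>
     (\<forall>g\<in>carrier G. \<forall>x y. ET x y \<longrightarrow> \<not> (\<phi> g x = y \<and> \<phi> g y = x))"

text \<open>Stabilizer of the edge {x,y}; for actions without inversions this is the pointwise one.\<close>

definition edge_stab :: "('g, 'b) monoid_scheme \<Rightarrow> ('g \<Rightarrow> 't \<Rightarrow> 't) \<Rightarrow> 't \<Rightarrow> 't \<Rightarrow> 'g set" where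
  "edge_stab G \<phi> x y = {g \<in> carrier G. {\<phi> g x, \<phi> g y} = {x, y}}"

definition infinite_cyclic :: "('g, 'b) monoid_scheme \<Rightarrow> 'g set \<Rightarrow> bool" where
  "infinite_cyclic G H \<longleftrightarrow>
     (\<exists>g \<in> carrier G. H = {g [^]\<^bsub>G\<^esub> (k::int) | k. True} \<and>
                      (\<forall>k::int. k \<noteq> 0 \<longrightarrow> g [^]\<^bsub>G\<^esub> k \<noteq> \<one>\<^bsub>G\<^esub>))"

definition elliptic :: "'t set \<Rightarrow> ('g \<Rightarrow> 't \<Rightarrow> 't) \<Rightarrow> 'g \<Rightarrow> bool" where
  "elliptic VT \<phi> g \<longleftrightarrow> (\<exists>x\<in>VT. \<phi> g x = x)"

end

theory Submission
  imports Defs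
begin



locale treeL =
  fixes VT :: "'t set" and ET :: "'t \<Rightarrow> 't \<Rightarrow> bool"
  assumes tree: "is_tree VT ET"
begin

definition walk :: "(nat \<Rightarrow> 't) \<Rightarrow> nat \<Rightarrow> bool" where
  "walk w n \<longleftrightarrow> (\<forall>i<n. ET (w i) (w (Suc i)))"

definition red :: "(nat \<Rightarrow> 't) \<Rightarrow> nat \<Rightarrow> bool" where
  "red w n \<longleftrightarrow> walk w n \<and> (\<forall>i. i + 2 \<le> n \<longrightarrow> w i \<noteq> w (i + 2))"

lemma ET_VT: "ET x y \<Longrightarrow> x \<in> VT \<and> y \<in> VT"
  using tree unfolding is_tree_def by blast

lemma ET_sym: "ET x y \<Longrightarrow> ET y x"
  using tree unfolding is_tree_def by blast

lemma ET_irrefl: "\<not> ET x x"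
  using tree unfolding is_tree_def by blast

lemma no_cycle: "\<not> (\<exists>p. 3 \<le> length p \<and> distinct p \<and> set p \<subseteq> VT \<and>
            (\<forall>i < length p - 1. ET (p ! i) (p ! Suc i)) \<and> ET (last p) (hd p))"
  using tree unfolding is_tree_def by blast

lemma walk_VT: assumes "walk w n" "i \<le> n" "0 < n" shows "w i \<in> VT"
proof (cases "i < n")
  case True
  then show ?thesis using ET_VT assms unfolding walk_def by blast
next
  case False
  then have "i = Suc (n - 1)" "n - 1 < n" using assms by auto
  then show ?thesis using ET_VT assms unfolding walk_def by metis
qed

lemma red_inj_aux:
  assumes r: "red w n"
  shows "\<forall>i j. j - i = d \<longrightarrow> i < j \<longrightarrow> j \<le> n \<longrightarrow> w i \<noteq> w j"
proof (induction d rule: less_induct)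
  case (less d)
  show ?case
  proof (intro allI impI)
    fix i j assume d: "j - i = d" and ij: "i < j" and jn: "j \<le> n"
    show "w i \<noteq> w j"
    proof
      assume eq: "w i = w j"
      have wk: "walk w n" using r red_def by blast
      consider "d = 1" | "d = 2" | "d \<ge> 3" using d ij by linarith
      then show False
      proof cases
        case 1
        then have "j = Suc i" using d ij by linarith
        then have "i < n" using jn by simp
        then show False using wk \<open>j = Suc i\<close> eq ET_irrefl unfolding walk_def by metis
      next
        case 2
        then have "j = i + 2" using d ij by linarith
        then show False using r jn eq unfolding red_def by blast
      next
        case 3
        define p where "p = map w [i..<j]"
        have lp: "length p = d" using d p_def by simp
        have pn: "\<And>a. a < d \<Longrightarrow> p ! a = w (i + a)" using p_def d ij by simp
        have dist: "distinct p"
          unfolding distinct_conv_nth lp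
        proof (intro allI impI)
          fix a b assume a: "a < d" and b: "b < d" and ab: "a \<noteq> b"
          show "p ! a \<noteq> p ! b"
          proof (cases "a < b")
            case True
            have "b - a < d" using b by linarith
            then have "\<forall>i' j'. j' - i' = b - a \<longrightarrow> i' < j' \<longrightarrow> j' \<le> n \<longrightarrow> w i' \<noteq> w j'"
              by (rule less.IH)
            then have "w (i + a) \<noteq> w (i + b)" using True b d ij jn by simp
            then show ?thesis using pn a b by simp
          next
            case False
            then have "b < a" using ab by linarith
            have "a - b < d" using a by linarith
            then have "\<forall>i' j'. j' - i' = a - b \<longrightarrow> i' < j' \<longrightarrow> j' \<le> n \<longrightarrow> w i' \<noteq> w j'"
              by (rule less.IH)
            then have "w (i + b) \<noteq> w (i + a)" using \<open>b < a\<close> a d ij jn by simp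
            then show ?thesis using pn a b by simp
          qed
        qed
        have sub: "set p \<subseteq> VT"
        proof
          fix x assume "x \<in> set p"
          then obtain a where "a < d" "x = w (i + a)" using pn lp by (metis in_set_conv_nth)
          then show "x \<in> VT" using walk_VT[OF wk] d ij jn by auto
        qed
        have cons: "\<forall>a < length p - 1. ET (p ! a) (p ! Suc a)"
          using wk pn lp d ij jn unfolding walk_def by auto
        have "last p = w (j - 1)" using p_def ij by (simp add: last_map)
        moreover have "hd p = w i" using p_def ij by (simp add: hd_map)
        moreover have "ET (w (j - 1)) (w j)" using wk ij jn unfolding walk_def
        proof -
          have "j - 1 < n" "Suc (j - 1) = j" using ij jn by auto
          then show ?thesis using wk unfolding walk_def by metis
        qed
        ultimately have "ET (last p) (hd p)" using eq by simp
        then show False using no_cycle dist sub cons lp 3 by blast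
      qed
    qed
  qed
qed

lemma red_inj: "red w n \<Longrightarrow> i < j \<Longrightarrow> j \<le> n \<Longrightarrow> w i \<noteq> w j"
  using red_inj_aux by blast

lemma red_shift: "red w (Suc n) \<Longrightarrow> red (\<lambda>i. w (Suc i)) n"
  unfolding red_def walk_def
proof (intro conjI allI impI)
  fix i assume "(\<forall>i<Suc n. ET (w i) (w (Suc i))) \<and> (\<forall>i. i + 2 \<le> Suc n \<longrightarrow> w i \<noteq> w (i + 2))"
  then have a: "\<forall>i<Suc n. ET (w i) (w (Suc i))" and b: "\<forall>i. i + 2 \<le> Suc n \<longrightarrow> w i \<noteq> w (i + 2)" by auto
  { assume "i < n" then show "ET (w (Suc i)) (w (Suc (Suc i)))" using a by simp }
  { assume "i + 2 \<le> n" then have "Suc i + 2 \<le> Suc n" by simp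
    then have "w (Suc i) \<noteq> w (Suc i + 2)" using b by blast
    then show "w (Suc i) \<noteq> w (Suc (i + 2))" by simp }
qed

lemma red_unique:
  "red w n \<Longrightarrow> red w' n' \<Longrightarrow> w 0 = w' 0 \<Longrightarrow> w n = w' n' \<Longrightarrow> n = n' \<and> (\<forall>i\<le>n. w i = w' i)"
proof (induction n arbitrary: w w' n')
  case 0
  show ?case
  proof (cases n')
    case 0 then show ?thesis using "0.prems" by simp
  next
    case (Suc k)
    then show ?thesis using red_inj[OF "0.prems"(2), of 0 n'] "0.prems" by simp
  qed
next
  case (Suc n)
  show ?case
  proof (cases n')
    case 0
    then show ?thesis using red_inj[OF Suc.prems(1), of 0 "Suc n"] Suc.prems by simp
  next
    case (Suc k)
    show ?thesis
    proof (cases "w 1 = w' 1")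
      case True
      have "n = k \<and> (\<forall>i\<le>n. w (Suc i) = w' (Suc i))"
        using Suc.IH[OF red_shift[OF Suc.prems(1)], of "\<lambda>i. w' (Suc i)" k]
          red_shift[of w' k] Suc.prems True \<open>n' = Suc k\<close> by simp
      then show ?thesis using Suc.prems \<open>n' = Suc k\<close>
        by (metis Suc_le_D Suc_le_mono le0 le_zero_eq not0_implies_Suc)
    next
      case False
      define N where "N = Suc n"
      define u where "u i = (if i \<le> n' then w' (n' - i) else w (i - n'))" for i
      have wk: "walk w N" "walk w' n'" using Suc.prems N_def unfolding red_def by auto
      have rd: "\<forall>i. i + 2 \<le> N \<longrightarrow> w i \<noteq> w (i + 2)" "\<forall>i. i + 2 \<le> n' \<longrightarrow> w' i \<noteq> w' (i + 2)"
        using Suc.prems N_def unfolding red_def by auto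
      have "walk u (n' + N)"
        unfolding walk_def
      proof (intro allI impI)
        fix i assume i: "i < n' + N"
        show "ET (u i) (u (Suc i))"
        proof (cases "i < n'")
          case True
          have "ET (w' (n' - Suc i)) (w' (Suc (n' - Suc i)))"
            using wk(2) True unfolding walk_def by simp
          moreover have "Suc (n' - Suc i) = n' - i" using True by simp
          ultimately show ?thesis using True ET_sym unfolding u_def by simp
        next
          case False
          have "ET (w (i - n')) (w (Suc (i - n')))" using wk(1) False i unfolding walk_def by simp
          moreover have "u i = w (i - n')" using False Suc.prems(3) unfolding u_def by auto
          moreover have "u (Suc i) = w (Suc (i - n'))" using False unfolding u_def
            by (simp add: Suc_diff_le)
          ultimately show ?thesis by simp
        qed
      qed
      moreover have "\<forall>i. i + 2 \<le> n' + N \<longrightarrow> u i \<noteq> u (i + 2)"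
      proof (intro allI impI)
        fix i assume i: "i + 2 \<le> n' + N"
        consider "i + 2 \<le> n'" | "i + 1 = n'" | "n' \<le> i" by linarith
        then show "u i \<noteq> u (i + 2)"
        proof cases
          case 1
          then have "w' (n' - (i + 2)) \<noteq> w' (n' - (i + 2) + 2)" using rd(2) by simp
          moreover have "n' - (i + 2) + 2 = n' - i" using 1 by simp
          ultimately show ?thesis using 1 unfolding u_def by (simp add: eq_commute)
        next
          case 2
          then have "u i = w' 1" "u (i + 2) = w 1" unfolding u_def by auto
          then show ?thesis using False by simp
        next
          case 3
          then have "u i = w (i - n')"
            using Suc.prems(3) unfolding u_def by (cases "i = n'") auto
          moreover have "u (i + 2) = w (i - n' + 2)"
          proof -
            have "i + 2 - n' = i - n' + 2" using 3 by simp
            then show ?thesis using 3 unfolding u_def by simp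
          qed
          ultimately show ?thesis using rd(1) i 3 by simp
        qed
      qed
      ultimately have "red u (n' + N)" unfolding red_def by simp
      then have "u 0 \<noteq> u (n' + N)" using red_inj N_def by simp
      moreover have "u 0 = w' n'" unfolding u_def by simp
      moreover have "u (n' + N) = w N" unfolding u_def N_def by simp
      ultimately show ?thesis using Suc.prems(4) N_def by simp
    qed
  qed
qed

lemma red_trunc: "red w n \<Longrightarrow> k \<le> n \<Longrightarrow> red w k"
  unfolding red_def walk_def by auto

definition dist :: "'t \<Rightarrow> 't \<Rightarrow> nat" where
  "dist x y = (LEAST n. \<exists>w. walk w n \<and> w 0 = x \<and> w n = y)"

lemma walk_exists:
  assumes "x \<in> VT" "y \<in> VT" shows "\<exists>w n. walk w n \<and> w 0 = x \<and> w n = y"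
proof -
  have "ET\<^sup>*\<^sup>* x y" using tree assms unfolding is_tree_def by blast
  then show ?thesis
  proof (induction rule: rtranclp_induct)
    case base
    then show ?case by (rule exI[of _ "\<lambda>_. x"], rule exI[of _ 0], simp add: walk_def)
  next
    case (step y z)
    then obtain w n where w: "walk w n" "w 0 = x" "w n = y" by blast
    define w' where "w' i = (if i \<le> n then w i else z)" for i
    have "walk w' (Suc n)" using w step(2) unfolding walk_def w'_def
      by (auto simp: not_less_eq_eq le_Suc_eq)
    moreover have "w' 0 = x" "w' (Suc n) = z" using w unfolding w'_def by auto
    ultimately show ?case by blast
  qed
qed

lemma dist_red_exists:
  assumes "x \<in> VT" "y \<in> VT"
  shows "\<exists>w. red w (dist x y) \<and> w 0 = x \<and> w (dist x y) = y"
proof -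
  let ?P = "\<lambda>n. \<exists>w. walk w n \<and> w 0 = x \<and> w n = y"
  have "\<exists>n. ?P n" using walk_exists[OF assms] by blast
  then have P: "?P (dist x y)" unfolding dist_def by (rule LeastI_ex)
  then obtain w where w: "walk w (dist x y)" "w 0 = x" "w (dist x y) = y" by blast
  have "\<forall>i. i + 2 \<le> dist x y \<longrightarrow> w i \<noteq> w (i + 2)"
  proof (intro allI impI notI)
    fix i assume i: "i + 2 \<le> dist x y" and eq: "w i = w (i + 2)"
    define w' where "w' k = (if k \<le> i then w k else w (k + 2))" for k
    have "walk w' (dist x y - 2)"
      unfolding walk_def
    proof (intro allI impI)
      fix k assume k: "k < dist x y - 2"
      show "ET (w' k) (w' (Suc k))"
      proof (cases "k < i")
        case True then show ?thesis using w(1) k unfolding walk_def w'_def by auto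
      next
        case False
        then have "ET (w (k + 2)) (w (Suc (k + 2)))" using w(1) k unfolding walk_def by auto
        then show ?thesis using False eq unfolding w'_def by (cases "k = i") auto
      qed
    qed
    moreover have "w' 0 = x" using w unfolding w'_def by (cases "i = 0") (auto simp: eq)
    moreover have "w' (dist x y - 2) = y"
    proof (cases "dist x y - 2 \<le> i")
      case True
      then have "dist x y - 2 = i" using i by linarith
      then have "w' (dist x y - 2) = w i" unfolding w'_def by simp
      also have "\<dots> = w (i + 2)" by (rule eq)
      also have "i + 2 = dist x y" using \<open>dist x y - 2 = i\<close> i by linarith
      finally show ?thesis using w by simp
    next
      case False
      then have "dist x y - 2 + 2 = dist x y" using i by linarith
      then show ?thesis using w False unfolding w'_def by simp
    qed
    ultimately have "?P (dist x y - 2)" by blast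
    then have "dist x y \<le> dist x y - 2" unfolding dist_def by (rule Least_le)
    then show False using i by linarith
  qed
  then show ?thesis using w unfolding red_def by blast
qed

lemma dist_red:
  assumes "red w n" "w 0 \<in> VT" shows "dist (w 0) (w n) = n"
proof -
  have "w n \<in> VT" using assms walk_VT[of w n n] unfolding red_def by (cases "n = 0") auto
  then obtain u where u: "red u (dist (w 0) (w n))" "u 0 = w 0" "u (dist (w 0) (w n)) = w n"
    using dist_red_exists assms by blast
  then show ?thesis using red_unique[OF u(1) assms(1)] by simp
qed

end



locale treeAct = treeL VT ET for VT :: "'t set" and ET +
  fixes G :: "('g, 'b) monoid_scheme" (structure) and \<phi> :: "'g \<Rightarrow> 't \<Rightarrow> 't"
  assumes act: "tree_action G VT ET \<phi>"
begin

lemma ga: "group_action G VT \<phi>" using act unfolding tree_action_def by blast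

lemma grp: "group G" using ga unfolding group_action_def group_hom_def group_hom_axioms_def by blast

lemma phi_VT: "h \<in> carrier G \<Longrightarrow> x \<in> VT \<Longrightarrow> \<phi> h x \<in> VT"
  using group_action.element_image[OF ga] by blast

lemma phi_ET: "h \<in> carrier G \<Longrightarrow> ET x y \<Longrightarrow> ET (\<phi> h x) (\<phi> h y)"
  using act unfolding tree_action_def by blast

lemma no_inv: "h \<in> carrier G \<Longrightarrow> ET x y \<Longrightarrow> \<not> (\<phi> h x = y \<and> \<phi> h y = x)"
  using act unfolding tree_action_def by blast

lemma phi_inj: "h \<in> carrier G \<Longrightarrow> x \<in> VT \<Longrightarrow> y \<in> VT \<Longrightarrow> \<phi> h x = \<phi> h y \<Longrightarrow> x = y"
  using group_action.inj_prop[OF ga] by (meson inj_on_eq_iff)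

lemma phi_mult: "h \<in> carrier G \<Longrightarrow> k \<in> carrier G \<Longrightarrow> x \<in> VT \<Longrightarrow> \<phi> (h \<otimes> k) x = \<phi> h (\<phi> k x)"
  using group_action.composition_rule[OF ga] by blast

lemma phi_one: "\<phi> \<one> x = x" if "x \<in> VT"
proof -
  have "\<phi> \<one> = (\<lambda>x \<in> VT. x)" using group_action.id_eq_one[OF ga] by simp
  then show ?thesis using that by simp
qed

lemma red_phi:
  assumes "h \<in> carrier G" "red w n" "w 0 \<in> VT"
  shows "red (\<lambda>i. \<phi> h (w i)) n"
proof -
  have wk: "walk w n" using assms unfolding red_def by blast
  have "walk (\<lambda>i. \<phi> h (w i)) n" using wk phi_ET assms(1) unfolding walk_def by blast
  moreover have "\<forall>i. i + 2 \<le> n \<longrightarrow> \<phi> h (w i) \<noteq> \<phi> h (w (i + 2))"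
  proof (intro allI impI notI)
    fix i assume i: "i + 2 \<le> n" and e: "\<phi> h (w i) = \<phi> h (w (i + 2))"
    have "w i \<in> VT" "w (i + 2) \<in> VT" using walk_VT[OF wk] i by auto
    then have "w i = w (i + 2)" using phi_inj[OF assms(1)] e by blast
    then show False using assms(2) i unfolding red_def by blast
  qed
  ultimately show ?thesis unfolding red_def by blast
qed

lemma dist_phi:
  assumes "h \<in> carrier G" "x \<in> VT" "y \<in> VT"
  shows "dist (\<phi> h x) (\<phi> h y) = dist x y"
proof -
  obtain w where w: "red w (dist x y)" "w 0 = x" "w (dist x y) = y"
    using dist_red_exists assms by blast
  have r: "red (\<lambda>i. \<phi> h (w i)) (dist x y)" using red_phi assms w by simp
  have v: "(\<lambda>i. \<phi> h (w i)) 0 \<in> VT" using phi_VT assms w by simp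
  have "dist ((\<lambda>i. \<phi> h (w i)) 0) ((\<lambda>i. \<phi> h (w i)) (dist x y)) = dist x y"
    by (rule dist_red[OF r v])
  then show ?thesis using w by simp
qed

end

locale hyp = treeAct VT ET G \<phi> for VT :: "'t set" and ET and G :: "('g, 'b) monoid_scheme" (structure) and \<phi> +
  fixes g assumes g: "g \<in> carrier G" and nofix: "\<forall>x\<in>VT. \<phi> g x \<noteq> x"
begin

definition D where "D x = dist x (\<phi> g x)"

definition m where "m = (LEAST n. \<exists>x\<in>VT. D x = n)"

lemma m_ex: "\<exists>x0\<in>VT. D x0 = m"
proof -
  obtain x where "x \<in> VT" using tree unfolding is_tree_def by blast
  then have "\<exists>n. \<exists>x\<in>VT. D x = n" by blast
  then show ?thesis unfolding m_def by (rule LeastI_ex)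
qed

lemma m_le: "x \<in> VT \<Longrightarrow> m \<le> D x"
  unfolding m_def by (rule Least_le) blast

definition x0 where "x0 = (SOME x. x \<in> VT \<and> D x = m)"

lemma x0: "x0 \<in> VT" "D x0 = m"
  using someI_ex[OF m_ex[unfolded Bex_def]] unfolding x0_def by auto

definition p where "p = (SOME w. red w m \<and> w 0 = x0 \<and> w m = \<phi> g x0)"

lemma p: "red p m" "p 0 = x0" "p m = \<phi> g x0"
proof -
  have "\<exists>w. red w m \<and> w 0 = x0 \<and> w m = \<phi> g x0"
    using dist_red_exists[of x0 "\<phi> g x0"] x0 phi_VT g unfolding D_def by auto
  then have "red p m \<and> p 0 = x0 \<and> p m = \<phi> g x0" unfolding p_def by (rule someI_ex)
  then show "red p m" "p 0 = x0" "p m = \<phi> g x0" by auto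
qed

lemma m_pos: "0 < m"
proof (rule ccontr)
  assume "\<not> 0 < m"
  then have "m = 0" by simp
  then have "x0 = \<phi> g x0" using p by simp
  then show False using nofix x0 by metis
qed

lemma p_VT: "i \<le> m \<Longrightarrow> p i \<in> VT"
  using walk_VT p m_pos unfolding red_def by blast

lemma turn: "p (m - 1) \<noteq> \<phi> g (p 1)"
proof
  assume eq: "p (m - 1) = \<phi> g (p 1)"
  have wk: "walk p m" using p unfolding red_def by blast
  show False
  proof (cases "m = 1")
    case True
    have "ET (p 0) (p (Suc 0))" using wk True unfolding walk_def by simp
    then have e: "ET x0 (\<phi> g x0)" using p True by simp
    have "\<phi> g x0 = \<phi> g x0" "\<phi> g (\<phi> g x0) = x0" using eq True p by auto
    then show False using no_inv[OF g e] by blast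
  next
    case False
    then have m2: "m \<ge> 2" using m_pos by linarith
    define q where "q i = p (Suc i)" for i
    have "Suc (m - 1) = m" using m2 by simp
    then have "red (\<lambda>i. p (Suc i)) (m - 1)" using red_shift[of p "m - 1"] p(1) by simp
    then have "red q (m - 2)" using red_trunc[of _ "m - 1" "m - 2"] unfolding q_def by simp
    moreover have "q 0 \<in> VT" using p_VT m2 unfolding q_def by simp
    ultimately have "dist (q 0) (q (m - 2)) = m - 2" by (rule dist_red)
    moreover have "Suc (m - 2) = m - 1" using m2 by simp
    then have "q (m - 2) = \<phi> g (p 1)" using eq unfolding q_def by simp
    ultimately have "D (p 1) = m - 2" unfolding D_def q_def by (simp add: \<open>q (m - 2) = \<phi> g (p 1)\<close>)
    moreover have "m \<le> D (p 1)" using m_le p_VT m2 by simp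
    ultimately show False using m2 by linarith
  qed
qed

end



context hyp begin

lemma gp_closed: "g [^] (q::int) \<in> carrier G"
  using group.int_pow_closed[OF grp g] by blast

lemma gp_succ: "g [^] (q + 1::int) = g [^] q \<otimes> g" "g [^] (q + 1::int) = g \<otimes> g [^] q"
proof -
  show "g [^] (q + 1::int) = g [^] q \<otimes> g"
    using group.int_pow_mult[OF grp g, of q 1] group.int_pow_1[OF grp g] by simp
  show "g [^] (q + 1::int) = g \<otimes> g [^] q"
    using group.int_pow_mult[OF grp g, of 1 q] group.int_pow_1[OF grp g] by (simp add: add.commute)
qed

definition ell :: "int \<Rightarrow> 't" where
  "ell k = \<phi> (g [^] (k div int m)) (p (nat (k mod int m)))"

lemma ell_formula:
  assumes "r \<le> m" shows "ell (q * int m + int r) = \<phi> (g [^] q) (p r)"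
proof (cases "r < m")
  case True
  have "(q * int m + int r) div int m = q" using True by simp
  moreover have "(q * int m + int r) mod int m = int r" using True by simp
  ultimately show ?thesis unfolding ell_def by simp
next
  case False
  then have r: "r = m" using assms by simp
  have e: "q * int m + int r = (q + 1) * int m" using r by (simp add: algebra_simps)
  have "(q + 1) * int m div int m = q + 1" using m_pos by simp
  moreover have "(q + 1) * int m mod int m = 0" by simp
  ultimately have "ell (q * int m + int r) = \<phi> (g [^] (q + 1)) (p 0)" unfolding ell_def e by simp
  also have "\<dots> = \<phi> (g [^] q) (\<phi> g (p 0))"
    using gp_succ(1) phi_mult gp_closed g p_VT by simp
  also have "\<dots> = \<phi> (g [^] q) (p r)" using p r by simp
  finally show ?thesis .
qed

lemma ell_dec: "\<exists>q r. k = q * int m + int r \<and> r < m"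
proof -
  have "k = k div int m * int m + int (nat (k mod int m))" using m_pos by simp
  moreover have "nat (k mod int m) < m" using m_pos by (simp add: nat_less_iff)
  ultimately show ?thesis by blast
qed

lemma ell_VT: "ell k \<in> VT"
proof -
  obtain q r where "k = q * int m + int r" "r < m" using ell_dec by blast
  then show ?thesis using ell_formula[of r q] phi_VT gp_closed p_VT by simp
qed

lemma ell_shift: "ell (k + int m) = \<phi> g (ell k)"
proof -
  obtain q r where k: "k = q * int m + int r" "r < m" using ell_dec by blast
  have e: "k + int m = (q + 1) * int m + int r" using k by (simp add: algebra_simps)
  have "ell (k + int m) = \<phi> (g [^] (q + 1)) (p r)" unfolding e using ell_formula[of r "q + 1"] k(2) by simp
  also have "\<dots> = \<phi> g (\<phi> (g [^] q) (p r))"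
    using gp_succ(2) phi_mult gp_closed g p_VT k by simp
  also have "\<dots> = \<phi> g (ell k)" unfolding k(1) using ell_formula[of r q] k(2) by simp
  finally show ?thesis .
qed

lemma ell_adj: "ET (ell k) (ell (k + 1))"
proof -
  obtain q r where k: "k = q * int m + int r" "r < m" using ell_dec by blast
  have "ET (p r) (p (Suc r))" using p k unfolding red_def walk_def by blast
  then have "ET (\<phi> (g [^] q) (p r)) (\<phi> (g [^] q) (p (Suc r)))" using phi_ET gp_closed by blast
  moreover have "k + 1 = q * int m + int (Suc r)" using k by simp
  ultimately show ?thesis using ell_formula k by (metis Suc_leI less_imp_le_nat)
qed

lemma ell_red: "ell k \<noteq> ell (k + 2)"
proof -
  obtain q r where k: "k = q * int m + int r" "r < m" using ell_dec by blast
  show ?thesis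
  proof (cases "r + 2 \<le> m")
    case True
    have "p r \<noteq> p (r + 2)" using p True unfolding red_def by blast
    moreover have "p r \<in> VT" "p (r + 2) \<in> VT" using p_VT True by auto
    ultimately have "\<phi> (g [^] q) (p r) \<noteq> \<phi> (g [^] q) (p (r + 2))" using phi_inj gp_closed by blast
    moreover have e: "k + 2 = q * int m + int (r + 2)" using k by simp
    ultimately show ?thesis unfolding e unfolding k(1) using ell_formula[of r q] ell_formula[of "r + 2" q] k(2) True by simp
  next
    case False
    then have r: "r = m - 1" using k by linarith
    have e: "k + 2 = (q + 1) * int m + int 1" using k r m_pos by (simp add: algebra_simps of_nat_diff)
    have "ell (k + 2) = \<phi> (g [^] (q + 1)) (p 1)" unfolding e using ell_formula[of 1 "q + 1"] m_pos by simp
    also have "\<dots> = \<phi> (g [^] q) (\<phi> g (p 1))"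
      using gp_succ(1) phi_mult gp_closed g p_VT m_pos by simp
    finally have e2: "ell (k + 2) = \<phi> (g [^] q) (\<phi> g (p 1))" .
    have e1: "ell k = \<phi> (g [^] q) (p (m - 1))" unfolding k(1) using ell_formula[of r q] r by simp
    have "p (m - 1) \<in> VT" "\<phi> g (p 1) \<in> VT" using p_VT phi_VT g m_pos by auto
    then show ?thesis using e1 e2 turn phi_inj gp_closed by metis
  qed
qed

lemma seg_red: "red (\<lambda>i. ell (a + int i)) n"
  unfolding red_def walk_def
proof (intro conjI allI impI)
  fix i
  have "a + int (Suc i) = (a + int i) + 1" by simp
  then show "ET (ell (a + int i)) (ell (a + int (Suc i)))" using ell_adj[of "a + int i"] by metis
  have "a + int (i + 2) = (a + int i) + 2" by simp
  then show "ell (a + int i) \<noteq> ell (a + int (i + 2))" using ell_red[of "a + int i"] by metis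
qed

lemma ell_inj: "ell i = ell j \<Longrightarrow> i = j"
proof (rule ccontr)
  assume e: "ell i = ell j" and ne: "i \<noteq> j"
  { fix a b assume ab: "a < b" "ell a = ell b"
    have "0 < nat (b - a)" using ab by simp
    from red_inj[OF seg_red[of a "nat (b - a)"] this order.refl]
    have "ell (a + int 0) \<noteq> ell (a + int (nat (b - a)))" by simp
    moreover have "a + int (nat (b - a)) = b" using ab by simp
    ultimately have False using ab by simp }
  then show False using e ne by (metis linorder_neqE)
qed

lemma dist_ell: "dist (ell a) (ell (a + int n)) = n"
  using dist_red[OF seg_red[of a n]] ell_VT by simp

lemma D_ell: "D (ell k) = m"
  unfolding D_def using ell_shift[of k, symmetric] dist_ell[of k m] by simp

lemma ell_adj_diff: "ET (ell i) (ell j) \<Longrightarrow> \<bar>i - j\<bar> = 1"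
proof -
  { fix a b assume ab: "a \<le> b" "ET (ell a) (ell b)"
    define w where "w k = (if k = 0 then ell a else ell b)" for k :: nat
    have "red w 1" using ab unfolding w_def red_def walk_def by auto
    moreover have "w 0 \<in> VT" using ell_VT w_def by simp
    ultimately have "dist (w 0) (w 1) = 1" by (rule dist_red)
    then have d1: "dist (ell a) (ell b) = 1" using w_def by simp
    have "a + int (nat (b - a)) = b" using ab by simp
    then have "dist (ell a) (ell b) = nat (b - a)" using dist_ell[of a "nat (b - a)"] by simp
    then have "nat (b - a) = 1" using d1 by simp
    then have "\<bar>a - b\<bar> = 1" using ab by simp }
  then show "ET (ell i) (ell j) \<Longrightarrow> \<bar>i - j\<bar> = 1"
    by (metis ET_sym abs_minus_commute linorder_le_cases)
qed

lemma pre_ell: "z \<in> VT \<Longrightarrow> \<phi> g z = ell k \<Longrightarrow> z = ell (k - int m)"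
  using ell_shift[of "k - int m"] phi_inj[OF g] ell_VT by simp

end



context hyp begin

lemma proj:
  assumes y: "y \<in> VT" and ny: "y \<notin> range ell"
  shows "m < D y"
proof -
  obtain w where w: "red w (dist y (ell 0))" "w 0 = y" "w (dist y (ell 0)) = ell 0"
    using dist_red_exists[OF y ell_VT] by blast
  define n where "n = dist y (ell 0)"
  have wn: "red w n" "w n = ell 0" using w n_def by auto
  have wk: "walk w n" using wn unfolding red_def by blast
  have n0: "0 < n"
  proof (rule ccontr)
    assume "\<not> 0 < n" then have "n = 0" by simp
    then have "y = ell 0" using wn w by simp
    then show False using ny by simp
  qed
  have wVT: "\<And>i. i \<le> n \<Longrightarrow> w i \<in> VT" using walk_VT[OF wk] n0 by blast
  define j where "j = (LEAST j. w j \<in> range ell)"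
  have ex: "w n \<in> range ell" using wn by simp
  have jr: "w j \<in> range ell" unfolding j_def by (rule LeastI[of _ n]) (rule ex)
  have jn: "j \<le> n" unfolding j_def by (rule Least_le) (rule ex)
  have nr: "\<And>i. i < j \<Longrightarrow> w i \<notin> range ell" unfolding j_def using not_less_Least by blast
  have j0: "0 < j"
  proof (rule ccontr)
    assume "\<not> 0 < j" then have "j = 0" by simp
    then show False using jr w ny by simp
  qed
  obtain k where k: "w j = ell k" using jr by blast
  have gnr: "\<And>i. i < j \<Longrightarrow> \<phi> g (w i) \<notin> range ell"
  proof
    fix i assume i: "i < j" and "\<phi> g (w i) \<in> range ell"
    then obtain k' where "\<phi> g (w i) = ell k'" by blast
    then have "w i = ell (k' - int m)" using pre_ell wVT i jn by simp
    then show False using nr[OF i] by simp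
  qed
  define L where "L = 2 * j + m"
  define u where "u i = (if i \<le> j then w i else if i \<le> j + m then ell (k + int (i - j)) else \<phi> g (w (L - i)))" for i
  have uh: "\<And>i. i \<le> j \<Longrightarrow> u i = w i" unfolding u_def by simp
  have um: "\<And>i. j \<le> i \<Longrightarrow> i \<le> j + m \<Longrightarrow> u i = ell (k + int (i - j))"
    unfolding u_def using k by auto
  have ut: "\<And>i. j + m \<le> i \<Longrightarrow> i \<le> L \<Longrightarrow> u i = \<phi> g (w (L - i))"
  proof -
    fix i assume i: "j + m \<le> i" "i \<le> L"
    show "u i = \<phi> g (w (L - i))"
    proof (cases "i = j + m")
      case True
      have "L - i = j" using True L_def by simp
      moreover have "u i = ell (k + int m)" using um True by simp
      ultimately show ?thesis using ell_shift k by simp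
    next
      case False
      then show ?thesis unfolding u_def using i m_pos by auto
    qed
  qed
  have "walk u L"
    unfolding walk_def
  proof (intro allI impI)
    fix i assume i: "i < L"
    consider "i < j" | "j \<le> i" "i < j + m" | "j + m \<le> i" by linarith
    then show "ET (u i) (u (Suc i))"
    proof cases
      case 1
      then show ?thesis using uh wk jn unfolding walk_def by simp
    next
      case 2
      have eq: "k + int (Suc i - j) = k + int (i - j) + 1" using 2 by simp
      have a: "u i = ell (k + int (i - j))" using um 2 by simp
      have "u (Suc i) = ell (k + int (Suc i - j))" using um[of "Suc i"] 2 by simp
      also have "\<dots> = ell (k + int (i - j) + 1)" using eq by (rule arg_cong)
      finally have b: "u (Suc i) = ell (k + int (i - j) + 1)" .
      show ?thesis unfolding a b by (rule ell_adj)
    next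
      case 3
      define a where "a = L - Suc i"
      have a: "a < j" "L - i = Suc a" using 3 i L_def a_def by auto
      have "ET (w a) (w (Suc a))" using wk a jn unfolding walk_def by simp
      then have "ET (\<phi> g (w (Suc a))) (\<phi> g (w a))" using phi_ET[OF g] ET_sym by blast
      then show ?thesis using ut[of i] ut[of "Suc i"] 3 i a a_def by simp
    qed
  qed
  moreover have "\<forall>i. i + 2 \<le> L \<longrightarrow> u i \<noteq> u (i + 2)"
  proof (intro allI impI)
    fix i assume i: "i + 2 \<le> L"
    consider "i + 2 \<le> j" | "i + 1 = j" | "j \<le> i" "i + 2 \<le> j + m" | "j \<le> i" "i + 1 = j + m" | "j + m \<le> i"
      by linarith
    then show "u i \<noteq> u (i + 2)"
    proof cases
      case 1
      then show ?thesis using uh wn jn unfolding red_def by simp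
    next
      case 2
      then have "u i = w i" "u (i + 2) = ell (k + int (i + 2 - j))" using uh um m_pos by auto
      then show ?thesis using nr 2 by auto
    next
      case 3
      then have "u i = ell (k + int (i - j))" "u (i + 2) = ell (k + int (i + 2 - j))" using um by auto
      then show ?thesis using ell_inj 3 by fastforce
    next
      case 4
      then have e1: "u i = ell (k + int (i - j))" using um by auto
      have e2: "u (i + 2) = \<phi> g (w (L - (i + 2)))" using ut 4 i by simp
      have "L - (i + 2) < j" using 4 L_def j0 by simp
      then have "\<phi> g (w (L - (i + 2))) \<notin> range ell" using gnr by blast
      then have "u (i + 2) \<notin> range ell" using e2 by simp
      moreover have "u i \<in> range ell" using e1 by simp
      ultimately show ?thesis by metis
    next
      case 5
      then have e: "u i = \<phi> g (w (L - i))" "u (i + 2) = \<phi> g (w (L - (i + 2)))" using ut i by auto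
      define c where "c = L - (i + 2)"
      have c: "L - i = c + 2" "c + 2 \<le> j" using 5 i L_def c_def by auto
      have "w c \<noteq> w (c + 2)" using wn c jn unfolding red_def by simp
      moreover have "w c \<in> VT" "w (c + 2) \<in> VT" using wVT c jn by auto
      ultimately have "\<phi> g (w (c + 2)) \<noteq> \<phi> g (w c)" using phi_inj[OF g] by metis
      then show ?thesis using e c c_def by simp
    qed
  qed
  ultimately have ru: "red u L" unfolding red_def by blast
  have "dist (u 0) (u L) = L" using dist_red[OF ru] uh y w by simp
  moreover have "u 0 = y" using uh w by simp
  moreover have "u L = \<phi> g y" using ut[of L] L_def w by simp
  ultimately have "D y = L" unfolding D_def by simp
  then show ?thesis using L_def j0 by simp
qed

end



context hyp begin

lemma comm_trans:
  assumes h: "h \<in> carrier G" and hg: "h \<otimes> g = g \<otimes> h"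
  shows "\<exists>t. \<forall>k. \<phi> h (ell k) = ell (k + t)"
proof -
  have inr: "\<phi> h (ell k) \<in> range ell" for k
  proof (rule ccontr)
    assume a: "\<phi> h (ell k) \<notin> range ell"
    have v: "\<phi> h (ell k) \<in> VT" using phi_VT h ell_VT by blast
    have "\<phi> g (\<phi> h (ell k)) = \<phi> h (\<phi> g (ell k))"
      using phi_mult[OF g h ell_VT] phi_mult[OF h g ell_VT] hg by simp
    then have "D (\<phi> h (ell k)) = dist (\<phi> h (ell k)) (\<phi> h (\<phi> g (ell k)))" unfolding D_def by simp
    also have "\<dots> = D (ell k)" unfolding D_def using dist_phi h ell_VT phi_VT g by simp
    finally have "D (\<phi> h (ell k)) = m" using D_ell by simp
    then show False using proj[OF v a] by simp
  qed
  define s where "s k = (SOME j. \<phi> h (ell k) = ell j)" for k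
  have s: "\<phi> h (ell k) = ell (s k)" for k
  proof -
    obtain j where "\<phi> h (ell k) = ell j" using inr[of k] by blast
    then show ?thesis unfolding s_def by (rule someI)
  qed
  have d1: "\<bar>s (k + 1) - s k\<bar> = 1" for k
  proof -
    have "ET (\<phi> h (ell k)) (\<phi> h (ell (k + 1)))" using phi_ET[OF h ell_adj] .
    then have "\<bar>s k - s (k + 1)\<bar> = 1" using ell_adj_diff s by simp
    then show ?thesis by linarith
  qed
  have d2: "s (k + 2) \<noteq> s k" for k
  proof
    assume "s (k + 2) = s k"
    then have "\<phi> h (ell (k + 2)) = \<phi> h (ell k)" using s by simp
    then have "ell (k + 2) = ell k" using phi_inj[OF h] ell_VT by blast
    then show False using ell_inj by fastforce
  qed
  define e where "e = s 1 - s 0"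
  have const: "s (k + 1) - s k = e" for k
  proof -
    have step: "s (k + 1 + 1) - s (k + 1) = s (k + 1) - s k" for k
      using d1[of k] d1[of "k + 1"] d2[of k] by (smt (verit))
    show ?thesis
    proof (induction k rule: int_induct[of _ 0])
      case base then show ?case unfolding e_def by simp
    next
      case (step1 i) then show ?case using step[of i] by simp
    next
      case (step2 i) then show ?case using step[of "i - 1"] by simp
    qed
  qed
  have lin: "s k = s 0 + e * k" for k
  proof (induction k rule: int_induct[of _ 0])
    case base then show ?case by simp
  next
    case (step1 i) then show ?case using const[of i] by (simp add: algebra_simps)
  next
    case (step2 i) then show ?case using const[of "i - 1"] by (simp add: algebra_simps)
  qed
  have e1: "\<bar>e\<bar> = 1" using d1[of 0] unfolding e_def by simp
  have "\<phi> h (ell (int m)) = \<phi> h (\<phi> g (ell 0))" using ell_shift[of 0] by simp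
  also have "\<dots> = \<phi> g (\<phi> h (ell 0))" using phi_mult[OF g h ell_VT] phi_mult[OF h g ell_VT] hg by simp
  also have "\<dots> = ell (s 0 + int m)" using s ell_shift by simp
  finally have "ell (s (int m)) = ell (s 0 + int m)" using s by simp
  then have "s (int m) = s 0 + int m" using ell_inj by blast
  then have "e * int m = int m" using lin[of "int m"] by simp
  then have "e = 1" using m_pos by simp
  have "\<forall>k. \<phi> h (ell k) = ell (k + s 0)"
  proof
    fix k
    have sk: "s k = k + s 0" using lin[of k] \<open>e = 1\<close> by simp
    have "\<phi> h (ell k) = ell (s k)" by (rule s)
    also have "\<dots> = ell (k + s 0)" using sk by (rule arg_cong)
    finally show "\<phi> h (ell k) = ell (k + s 0)" .
  qed
  then show ?thesis by blast
qed

end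



context hyp begin

lemma mon: "monoid G" using grp group.is_monoid by blast

definition Tr where "Tr h t \<longleftrightarrow> h \<in> carrier G \<and> (\<forall>k. \<phi> h (ell k) = ell (k + t))"

lemma Tr_mult: "Tr h t \<Longrightarrow> Tr h' t' \<Longrightarrow> Tr (h \<otimes> h') (t + t')"
proof -
  assume a: "Tr h t" "Tr h' t'"
  have c: "h \<otimes> h' \<in> carrier G" using a monoid.m_closed[OF mon] Tr_def by blast
  have "\<phi> (h \<otimes> h') (ell k) = ell (k + (t + t'))" for k
  proof -
    have "\<phi> (h \<otimes> h') (ell k) = \<phi> h (\<phi> h' (ell k))" using phi_mult a ell_VT Tr_def by blast
    also have "\<dots> = ell (k + t' + t)" using a unfolding Tr_def by simp
    finally show ?thesis by (simp add: algebra_simps)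
  qed
  then show ?thesis using c Tr_def by blast
qed

lemma Tr_one: "Tr \<one> 0"
  unfolding Tr_def using phi_one ell_VT monoid.one_closed[OF mon] by simp

lemma Tr_inv: assumes "Tr h t" shows "Tr (inv h) (- t)"
proof -
  have h: "h \<in> carrier G" using assms Tr_def by blast
  have ih: "inv h \<in> carrier G" using group.inv_closed[OF grp h] .
  have "\<phi> (inv h) (ell k) = ell (k - t)" for k
  proof -
    have "ell k = \<phi> h (ell (k - t))" using assms unfolding Tr_def by simp
    then have "\<phi> (inv h) (ell k) = \<phi> (inv h \<otimes> h) (ell (k - t))"
      using phi_mult[OF ih h ell_VT] by simp
    also have "\<dots> = ell (k - t)" using group.l_inv[OF grp h] phi_one ell_VT by simp
    finally show ?thesis .
  qed
  then show ?thesis unfolding Tr_def using ih by simp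
qed

lemma Tr_natpow: "Tr h t \<Longrightarrow> Tr (h [^] (n::nat)) (int n * t)"
proof (induction n)
  case 0 then show ?case using Tr_one by simp
next
  case (Suc n)
  have "Tr (h [^] n \<otimes> h) (int n * t + t)" using Tr_mult Suc by blast
  then show ?case by (simp add: algebra_simps)
qed

lemma Tr_intpow: assumes "Tr h t" shows "Tr (h [^] (z::int)) (z * t)"
proof (cases "z < 0")
  case True
  have "Tr (inv (h [^] nat (- z))) (- (int (nat (- z)) * t))" using Tr_inv Tr_natpow assms by blast
  moreover have "h [^] z = inv (h [^] nat (- z))" by (simp add: int_pow_def2 True del: pow_nat)
  moreover have "- (int (nat (- z)) * t) = z * t" using True by simp
  ultimately show ?thesis by simp
next
  case False
  have "Tr (h [^] nat z) (int (nat z) * t)" using Tr_natpow assms by blast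
  moreover have "h [^] z = h [^] nat z" by (simp add: int_pow_def2 False del: pow_nat)
  moreover have "int (nat z) = z" using False by simp
  ultimately show ?thesis by metis
qed

lemma Tr_g: "Tr g (int m)" unfolding Tr_def using g ell_shift by simp

lemma fix_elem:
  assumes a: "a \<in> carrier G" and ag: "a \<otimes> g = g \<otimes> a"
  shows "\<exists>t::int. a [^] (int m) \<otimes> g [^] (- t) \<in> edge_stab G \<phi> (ell 0) (ell 1) \<and> ET (ell 0) (ell 1)"
proof -
  obtain t where t: "\<forall>k. \<phi> a (ell k) = ell (k + t)" using comm_trans[OF a ag] by blast
  have "Tr a t" using a t Tr_def by simp
  then have "Tr (a [^] (int m) \<otimes> g [^] (- t)) (int m * t + (- t) * int m)"
    using Tr_mult Tr_intpow Tr_g by blast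
  then have T: "Tr (a [^] (int m) \<otimes> g [^] (- t)) 0" by simp
  have "ET (ell 0) (ell (0 + 1))" by (rule ell_adj)
  then have "ET (ell 0) (ell 1)" by simp
  moreover have "a [^] (int m) \<otimes> g [^] (- t) \<in> edge_stab G \<phi> (ell 0) (ell 1)"
    using T unfolding Tr_def edge_stab_def by auto
  ultimately show ?thesis by blast
qed

end

section \<open>RAAG algebra\<close>

lemma rel_ctx: "raag_rel E u u' \<Longrightarrow> raag_rel E (xs @ u @ ys) (xs @ u' @ ys)"
proof (induction rule: raag_rel.induct)
  case (refl w) then show ?case by (rule raag_rel.refl)
next
  case (cancel xs' a b ys')
  then show ?case using raag_rel.cancel[of E "xs @ xs'" a b "ys' @ ys"] by simp
next
  case (comm a c xs' b d ys')
  then show ?case using raag_rel.comm[of E a c "xs @ xs'" b d "ys' @ ys"] by simp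
next
  case (sym u w) then show ?case using raag_rel.sym by blast
next
  case (trans u w z) then show ?case using raag_rel.trans by blast
qed

lemma rel_app: "raag_rel E u u' \<Longrightarrow> raag_rel E w w' \<Longrightarrow> raag_rel E (u @ w) (u' @ w')"
  using rel_ctx[of E u u' "[]" w] rel_ctx[of E w w' u' "[]"] raag_rel.trans by fastforce

lemma class_eq: "raag_rel E u w \<Longrightarrow> raag_class E u = raag_class E w"
  unfolding raag_class_def using raag_rel.trans raag_rel.sym by blast

lemma some_class: "raag_rel E u (SOME x. x \<in> raag_class E u)"
proof -
  have "u \<in> raag_class E u" unfolding raag_class_def by (simp add: raag_rel.refl)
  then have "(SOME x. x \<in> raag_class E u) \<in> raag_class E u" by (rule someI)
  then show ?thesis unfolding raag_class_def by simp
qed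

lemma mult_class: "raag_class E u \<otimes>\<^bsub>RAAG E\<^esub> raag_class E w = raag_class E (u @ w)"
proof -
  have "raag_rel E (u @ w) ((SOME x. x \<in> raag_class E u) @ (SOME x. x \<in> raag_class E w))"
    using rel_app some_class by blast
  then show ?thesis unfolding RAAG_def raag_mult_def using class_eq[symmetric] by simp
qed

definition esum :: "'v \<Rightarrow> ('v \<times> bool) list \<Rightarrow> int" where
  "esum a w = sum_list (map (\<lambda>(x, b). if x = a then (if b then 1 else -1) else 0) w)"

lemma esum_rel: "raag_rel E u w \<Longrightarrow> esum a u = esum a w"
  by (induction rule: raag_rel.induct) (auto simp: esum_def)

definition esumG :: "'v \<Rightarrow> ('v \<times> bool) list set \<Rightarrow> int" where
  "esumG a C = esum a (SOME x. x \<in> C)"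

lemma esumG_class: "esumG a (raag_class E u) = esum a u"
  unfolding esumG_def using esum_rel[OF some_class[of E u], of a] by simp

lemma esumG_mult:
  assumes "Xa \<in> carrier (RAAG E)" "Ya \<in> carrier (RAAG E)"
  shows "esumG a (Xa \<otimes>\<^bsub>RAAG E\<^esub> Ya) = esumG a Xa + esumG a Ya"
proof -
  obtain u w where uw: "Xa = raag_class E u" "Ya = raag_class E w" using assms unfolding RAAG_def by auto
  have "esumG a (Xa \<otimes>\<^bsub>RAAG E\<^esub> Ya) = esumG a (raag_class E (u @ w))" using mult_class uw by metis
  also have "\<dots> = esum a (u @ w)" by (rule esumG_class)
  also have "\<dots> = esum a u + esum a w" by (simp add: esum_def)
  finally show ?thesis using esumG_class uw by metis
qed

lemma esumG_one: "esumG a \<one>\<^bsub>RAAG E\<^esub> = 0"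
  unfolding RAAG_def using esumG_class[of a E "[]"] by (simp add: esum_def)

lemma esumG_inv:
  assumes grp: "group (RAAG E)" and Xa: "Xa \<in> carrier (RAAG E)"
  shows "esumG a (inv\<^bsub>RAAG E\<^esub> Xa) = - esumG a Xa"
proof -
  have "Xa \<otimes>\<^bsub>RAAG E\<^esub> inv\<^bsub>RAAG E\<^esub> Xa = \<one>\<^bsub>RAAG E\<^esub>" using group.r_inv[OF grp Xa] .
  then have "esumG a Xa + esumG a (inv\<^bsub>RAAG E\<^esub> Xa) = 0"
    using esumG_mult[OF Xa group.inv_closed[OF grp Xa]] esumG_one by metis
  then show ?thesis by simp
qed

lemma esumG_natpow:
  assumes grp: "group (RAAG E)" and Xa: "Xa \<in> carrier (RAAG E)"
  shows "esumG a (Xa [^]\<^bsub>RAAG E\<^esub> (n::nat)) = int n * esumG a Xa"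
proof (induction n)
  case 0 then show ?case using esumG_one by simp
next
  case (Suc n)
  have "Xa [^]\<^bsub>RAAG E\<^esub> n \<in> carrier (RAAG E)" using monoid.nat_pow_closed[OF group.is_monoid[OF grp] Xa] .
  then show ?case using Suc esumG_mult[OF _ Xa] by (simp add: algebra_simps)
qed

lemma esumG_intpow:
  assumes grp: "group (RAAG E)" and Xa: "Xa \<in> carrier (RAAG E)"
  shows "esumG a (Xa [^]\<^bsub>RAAG E\<^esub> (z::int)) = z * esumG a Xa"
proof (cases "z < 0")
  case True
  have "Xa [^]\<^bsub>RAAG E\<^esub> nat (- z) \<in> carrier (RAAG E)" using monoid.nat_pow_closed[OF group.is_monoid[OF grp] Xa] .
  moreover have "Xa [^]\<^bsub>RAAG E\<^esub> z = inv\<^bsub>RAAG E\<^esub> (Xa [^]\<^bsub>RAAG E\<^esub> nat (- z))"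
    by (simp add: int_pow_def2 True del: pow_nat)
  ultimately have "esumG a (Xa [^]\<^bsub>RAAG E\<^esub> z) = - esumG a (Xa [^]\<^bsub>RAAG E\<^esub> nat (- z))"
    using esumG_inv[OF grp] by (simp del: pow_nat)
  also have "\<dots> = - (int (nat (- z)) * esumG a Xa)" using esumG_natpow[OF grp Xa] by (simp del: pow_nat)
  finally show ?thesis using True by simp
next
  case False
  moreover have "Xa [^]\<^bsub>RAAG E\<^esub> z = Xa [^]\<^bsub>RAAG E\<^esub> nat z"
    by (simp add: int_pow_def2 False del: pow_nat)
  ultimately show ?thesis using esumG_natpow[OF grp Xa, of a "nat z"] by (simp del: pow_nat)
qed

lemma gen_carrier: "raag_gen E v \<in> carrier (RAAG E)"
  unfolding raag_gen_def RAAG_def by simp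

lemma esumG_gen: "esumG a (raag_gen E v) = (if v = a then 1 else 0)"
  unfolding raag_gen_def esumG_class by (simp add: esum_def)

lemma gen_comm: "E v a \<Longrightarrow> raag_gen E a \<otimes>\<^bsub>RAAG E\<^esub> raag_gen E v = raag_gen E v \<otimes>\<^bsub>RAAG E\<^esub> raag_gen E a"
  unfolding raag_gen_def mult_class
  using raag_rel.comm[of E v a "[]" True True "[]"] class_eq[of E] by (simp add: raag_rel.sym)




theorem corollary3p4:
  fixes E :: "'v::finite \<Rightarrow> 'v \<Rightarrow> bool"
    and VT :: "'t set" and ET :: "'t \<Rightarrow> 't \<Rightarrow> bool"
    and \<phi> :: "('v \<times> bool) list set \<Rightarrow> 't \<Rightarrow> 't"
    and v :: 'v
  assumes "simplicial_graph E"
    and "graph_connected E"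
    and "3 \<le> card (UNIV :: 'v set)"
    and "is_tree VT ET"
    and "tree_action (RAAG E) VT ET \<phi>"
    and "\<forall>x y. ET x y \<longrightarrow> infinite_cyclic (RAAG E) (edge_stab (RAAG E) \<phi> x y)"
    and "valence E v > 1"
  shows "elliptic VT \<phi> (raag_gen E v)"
proof (rule ccontr)
  assume ne: "\<not> elliptic VT \<phi> (raag_gen E v)"
  have nofix: "\<forall>x\<in>VT. \<phi> (raag_gen E v) x \<noteq> x" using ne unfolding elliptic_def by blast
  interpret H: hyp VT ET "RAAG E" \<phi> "raag_gen E v"
  proof (unfold_locales)
    show "is_tree VT ET" by (rule assms(4))
    show "tree_action (RAAG E) VT ET \<phi>" by (rule assms(5))
    show "raag_gen E v \<in> carrier (RAAG E)" by (rule gen_carrier)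
    show "\<forall>x\<in>VT. \<phi> (raag_gen E v) x \<noteq> x" by (rule nofix)
  qed
  have grp: "group (RAAG E)" by (rule H.grp)
  have irr: "\<And>u. \<not> E u u" using assms(1) unfolding simplicial_graph_def by blast
  define S where "S = {w. E v w}"
  have cS: "card S > 1" using assms(7) unfolding valence_def S_def by simp
  have fS: "finite S" by simp
  obtain a where aS: "a \<in> S" using cS by (metis card.empty ex_in_conv not_less_zero)
  have "card (S - {a}) > 0" using cS aS fS by simp
  then obtain b where bS: "b \<in> S - {a}" by (metis card.empty ex_in_conv less_irrefl)
  have Ea: "E v a" and Eb: "E v b" and ab: "a \<noteq> b" using aS bS S_def by auto
  have va: "v \<noteq> a" and vb: "v \<noteq> b" using Ea Eb irr by auto
  define g where "g = raag_gen E v"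
  define A where "A = raag_gen E a"
  define B where "B = raag_gen E b"
  have gc: "g \<in> carrier (RAAG E)" "A \<in> carrier (RAAG E)" "B \<in> carrier (RAAG E)"
    unfolding g_def A_def B_def by (rule gen_carrier)+
  obtain ta :: int where xa: "A [^]\<^bsub>RAAG E\<^esub> (int H.m) \<otimes>\<^bsub>RAAG E\<^esub> g [^]\<^bsub>RAAG E\<^esub> (- ta) \<in> edge_stab (RAAG E) \<phi> (H.ell 0) (H.ell 1)"
      and et: "ET (H.ell 0) (H.ell 1)"
    using H.fix_elem[OF gc(2)] gen_comm[of E v a, OF Ea] unfolding A_def g_def by blast
  obtain tb :: int where xb: "B [^]\<^bsub>RAAG E\<^esub> (int H.m) \<otimes>\<^bsub>RAAG E\<^esub> g [^]\<^bsub>RAAG E\<^esub> (- tb) \<in> edge_stab (RAAG E) \<phi> (H.ell 0) (H.ell 1)"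
    using H.fix_elem[OF gc(3)] gen_comm[of E v b, OF Eb] unfolding B_def g_def by blast
  obtain c where c: "c \<in> carrier (RAAG E)"
    and st: "edge_stab (RAAG E) \<phi> (H.ell 0) (H.ell 1) = {c [^]\<^bsub>RAAG E\<^esub> (k::int) | k. True}"
    using assms(6) et unfolding infinite_cyclic_def by blast
  obtain i :: int where i: "A [^]\<^bsub>RAAG E\<^esub> (int H.m) \<otimes>\<^bsub>RAAG E\<^esub> g [^]\<^bsub>RAAG E\<^esub> (- ta) = c [^]\<^bsub>RAAG E\<^esub> i"
    using xa st by blast
  obtain j :: int where j: "B [^]\<^bsub>RAAG E\<^esub> (int H.m) \<otimes>\<^bsub>RAAG E\<^esub> g [^]\<^bsub>RAAG E\<^esub> (- tb) = c [^]\<^bsub>RAAG E\<^esub> j"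
    using xb st by blast
  have pc: "\<And>h (z::int). h \<in> carrier (RAAG E) \<Longrightarrow> h [^]\<^bsub>RAAG E\<^esub> z \<in> carrier (RAAG E)"
    using group.int_pow_closed[OF grp] by blast
  have ev: "esumG u (h1 [^]\<^bsub>RAAG E\<^esub> (int H.m) \<otimes>\<^bsub>RAAG E\<^esub> g [^]\<^bsub>RAAG E\<^esub> (- t))
      = int H.m * esumG u h1 + (- t) * esumG u g" if "h1 \<in> carrier (RAAG E)" for u h1 t
    using esumG_mult[OF pc[OF that] pc[OF gc(1)]] esumG_intpow[OF grp that] esumG_intpow[OF grp gc(1)]
    by simp
  have eA: "esumG a A = 1" "esumG b A = 0" "esumG a B = 0" "esumG b B = 1" "esumG a g = 0" "esumG b g = 0"
    unfolding A_def B_def g_def esumG_gen using ab va vb by auto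
  have m0: "int H.m \<noteq> 0" using H.m_pos by simp
  have 1: "i * esumG a c = int H.m" using ev[OF gc(2), of a ta] eA i esumG_intpow[OF grp c] by simp
  have 2: "i * esumG b c = 0" using ev[OF gc(2), of b ta] eA i esumG_intpow[OF grp c] by simp
  have 3: "j * esumG b c = int H.m" using ev[OF gc(3), of b tb] eA j esumG_intpow[OF grp c] by simp
  have "i \<noteq> 0" using 1 m0 by auto
  then have "esumG b c = 0" using 2 by simp
  then show False using 3 m0 by simp
qed


end
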